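(* Let $k,d,n\in\mathbb N$, $Q,K,V\in\mathbb R^{k\times d}$, $A:=K^\top Q/\sqrt k$ and $R>0$. Masked self-attention $f^m$ with parameters $(A,V)$ is Lipschitz continuous on $B_R^n$ and $$\mathrm{Lip}\big(f^m_{|B_R^n}\big)\le\sqrt3\,\|V\|_2\big(\|A\|_2^2R^4(n+1)+n\big)^{1/2}.$$
   Context: Masked self-attention: for $X=(x_1,\dots,x_n)\in(\mathbb R^d)^n$, $f^m(X)_i=V\sum_{j=1}^iP_{ij}x_j$, $1\le i\le n$, with $P_{ij}=\exp(x_i^\top A^\top x_j)/\sum_{l=1}^i\exp(x_i^\top A^\top x_l)$ for $j\le i$. $B_R\subset\mathbb R^d$ is the closed ball of center 0, radius $R$. $\mathrm{Lip}(f^m_{|\mathcal X})=\sup_{X\ne Y\in\mathcal X}\|f^m(X)-f^m(Y)\|_F/\|X-Y\|_F$ with Frobenius norm $\|X\|_F=(\sum_i|x_i|^2)^{1/2}$; $\|\cdot\|_2$ is the spectral norm. *)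

theory Defs
  imports "HOL-Analysis.Analysis"
begin

text \<open>Sequences X = (x_1,...,x_n) are functions nat => real^'d; position i (1-based in the
paper) is index i-1 here, only indices below n are relevant.\<close>

definition attn_P :: "real^'d^'d \<Rightarrow> (nat \<Rightarrow> real^'d) \<Rightarrow> nat \<Rightarrow> nat \<Rightarrow> real" where
  "attn_P A X i j =
     exp (X i \<bullet> (transpose A *v X j)) / (\<Sum>l\<le>i. exp (X i \<bullet> (transpose A *v X l)))"

definition masked_attn :: "real^'d^'d \<Rightarrow> real^'d^'k \<Rightarrow> (nat \<Rightarrow> real^'d) \<Rightarrow> nat \<Rightarrow> real^'k" where
  "masked_attn A V X i = V *v (\<Sum>j\<le>i. attn_P A X i j *\<^sub>R X j)"

definition frob :: "nat \<Rightarrow> (nat \<Rightarrow> 'a::real_normed_vector) \<Rightarrow> real" where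
  "frob n X = sqrt (\<Sum>i<n. (norm (X i))\<^sup>2)"

definition spec_norm :: "real^'n^'m \<Rightarrow> real" where
  "spec_norm M = onorm (\<lambda>x. M *v x)"

end

theory Submission imports Defs begin
lemma wcs:
  fixes P x y :: "'i \<Rightarrow> real"
  assumes "\<forall>j\<in>I. P j \<ge> 0"
  shows "\<bar>\<Sum>j\<in>I. P j * x j * y j\<bar> \<le> sqrt (\<Sum>j\<in>I. P j * (x j)\<^sup>2) * sqrt (\<Sum>j\<in>I. P j * (y j)\<^sup>2)"
proof -
  have "(\<Sum>j\<in>I. (sqrt (P j) * x j) * (sqrt (P j) * y j))\<^sup>2 \<le> (\<Sum>j\<in>I. (sqrt (P j) * x j)\<^sup>2) * (\<Sum>j\<in>I. (sqrt (P j) * y j)\<^sup>2)"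
    by (rule Cauchy_Schwarz_ineq_sum)
  moreover have "(\<Sum>j\<in>I. (sqrt (P j) * x j) * (sqrt (P j) * y j)) = (\<Sum>j\<in>I. P j * x j * y j)"
    using assms by (intro sum.cong) (auto simp: algebra_simps real_sqrt_mult_self)
  moreover have "(\<Sum>j\<in>I. (sqrt (P j) * x j)\<^sup>2) = (\<Sum>j\<in>I. P j * (x j)\<^sup>2)"
    using assms by (intro sum.cong) (auto simp: power_mult_distrib)
  moreover have "(\<Sum>j\<in>I. (sqrt (P j) * y j)\<^sup>2) = (\<Sum>j\<in>I. P j * (y j)\<^sup>2)"
    using assms by (intro sum.cong) (auto simp: power_mult_distrib)
  ultimately have "(\<Sum>j\<in>I. P j * x j * y j)\<^sup>2 \<le> (\<Sum>j\<in>I. P j * (x j)\<^sup>2) * (\<Sum>j\<in>I. P j * (y j)\<^sup>2)" by simp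
  then have "sqrt ((\<Sum>j\<in>I. P j * x j * y j)\<^sup>2) \<le> sqrt ((\<Sum>j\<in>I. P j * (x j)\<^sup>2) * (\<Sum>j\<in>I. P j * (y j)\<^sup>2))"
    using real_sqrt_le_mono by blast
  then show ?thesis by (simp add: real_sqrt_mult)
qed

lemma variance:
  fixes z :: "'i \<Rightarrow> 'v::real_inner"
  assumes "sum P I = 1"
  shows "(\<Sum>j\<in>I. P j * (norm (z j - (\<Sum>l\<in>I. P l *\<^sub>R z l)))\<^sup>2)
        = (\<Sum>j\<in>I. P j * (norm (z j))\<^sup>2) - (norm (\<Sum>l\<in>I. P l *\<^sub>R z l))\<^sup>2"
proof -
  define G where "G = (\<Sum>l\<in>I. P l *\<^sub>R z l)"
  have "(\<Sum>j\<in>I. P j * (norm (z j - G))\<^sup>2) = (\<Sum>j\<in>I. P j * (norm (z j))\<^sup>2 - 2 * ((P j *\<^sub>R z j) \<bullet> G) + P j * (G \<bullet> G))"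
    by (intro sum.cong) (auto simp: power2_norm_eq_inner inner_diff algebra_simps inner_commute)
  also have "\<dots> = (\<Sum>j\<in>I. P j * (norm (z j))\<^sup>2) - 2 * (G \<bullet> G) + G \<bullet> G"
    by (simp add: sum.distrib sum_subtractf inner_sum_left G_def sum_distrib_right[symmetric] assms sum_distrib_left[symmetric])
  finally show ?thesis by (simp add: G_def power2_norm_eq_inner)
qed

lemma row_bound:
  fixes z h :: "'i \<Rightarrow> real^'d" and P :: "'i \<Rightarrow> real" and L :: "real^'d \<Rightarrow> real"
    and B :: "real^'d^'d"
  assumes fin: "finite I" and iI: "i \<in> I" and Pnn: "\<forall>j\<in>I. P j \<ge> 0" and P1: "sum P I = 1"
    and zR: "\<forall>j\<in>I. norm (z j) \<le> R" and R0: "R \<ge> 0"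
    and lin: "linear L" and LC: "\<And>v. \<bar>L v\<bar> \<le> C * norm v"
    and Ba: "\<And>u w. \<bar>u \<bullet> (B *v w)\<bar> \<le> a * norm u * norm w" and a0: "a \<ge> 0" and C0: "C \<ge> 0"
  shows "\<bar>(\<Sum>j\<in>I. P j * L (h j)) + (\<Sum>j\<in>I. P j * (h i \<bullet> (B *v z j) + z i \<bullet> (B *v h j)) * L (z j))
          - (\<Sum>j\<in>I. P j * L (z j)) * (\<Sum>j\<in>I. P j * (h i \<bullet> (B *v z j) + z i \<bullet> (B *v h j)))\<bar>
         \<le> C * (sqrt (\<Sum>j\<in>I. P j * (norm (h j))\<^sup>2) + a * R\<^sup>2 * norm (h i) + a * R\<^sup>2 * sqrt (\<Sum>j\<in>I. P j * (norm (h j))\<^sup>2))"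
proof -
  define q where "q = sqrt (\<Sum>j\<in>I. P j * (norm (h j))\<^sup>2)"
  define G where "G = (\<Sum>l\<in>I. P l *\<^sub>R z l)"
  define s' where "s' j = h i \<bullet> (B *v z j) + z i \<bullet> (B *v h j)" for j
  define Va where "Va = (\<Sum>j\<in>I. P j * (norm (z j - G))\<^sup>2)"
  have LG: "L G = (\<Sum>j\<in>I. P j * L (z j))"
    unfolding G_def using lin by (simp add: linear_sum linear_cmul)
  have Ldiff: "L (z j - G) = L (z j) - L G" for j using lin by (simp add: linear_diff)
  have sum0: "(\<Sum>j\<in>I. P j * L (z j - G)) = 0"
    by (simp add: Ldiff right_diff_distrib sum_subtractf LG sum_distrib_right[symmetric] P1)
  have Va_le: "Va \<le> R\<^sup>2"
  proof -
    have "Va = (\<Sum>j\<in>I. P j * (norm (z j))\<^sup>2) - (norm G)\<^sup>2"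
      unfolding Va_def G_def by (rule variance[OF P1])
    also have "\<dots> \<le> (\<Sum>j\<in>I. P j * (norm (z j))\<^sup>2)" by simp
    also have "\<dots> \<le> (\<Sum>j\<in>I. P j * R\<^sup>2)"
      using Pnn zR by (intro sum_mono mult_left_mono power_mono) auto
    also have "\<dots> = R\<^sup>2" by (simp add: sum_distrib_right[symmetric] P1)
    finally show ?thesis .
  qed
  have Va0: "Va \<ge> 0" unfolding Va_def using Pnn by (intro sum_nonneg) auto
  have sqVa: "sqrt Va \<le> R" using Va_le R0 Va0 by (metis real_sqrt_le_mono real_sqrt_abs abs_of_nonneg)
  have q0: "q \<ge> 0" unfolding q_def using Pnn by (simp add: sum_nonneg)
  have T0: "\<bar>\<Sum>j\<in>I. P j * L (h j)\<bar> \<le> C * q"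
  proof -
    have "\<bar>\<Sum>j\<in>I. P j * L (h j)\<bar> \<le> (\<Sum>j\<in>I. \<bar>P j * L (h j)\<bar>)" by (rule sum_abs)
    also have "\<dots> \<le> (\<Sum>j\<in>I. C * (P j * norm (h j) * 1))"
    proof (intro sum_mono)
      fix j assume j: "j \<in> I"
      have "\<bar>P j * L (h j)\<bar> = P j * \<bar>L (h j)\<bar>" using Pnn j by (simp add: abs_mult)
      also have "\<dots> \<le> P j * (C * norm (h j))" using Pnn j LC by (intro mult_left_mono) auto
      finally show "\<bar>P j * L (h j)\<bar> \<le> C * (P j * norm (h j) * 1)" by (simp add: algebra_simps)
    qed
    also have "\<dots> = C * (\<Sum>j\<in>I. P j * norm (h j) * 1)" by (simp add: sum_distrib_left)
    also have "\<dots> \<le> C * (sqrt (\<Sum>j\<in>I. P j * (norm (h j))\<^sup>2) * sqrt (\<Sum>j\<in>I. P j * 1\<^sup>2))"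
      using wcs[OF Pnn, of "\<lambda>j. norm (h j)" "\<lambda>_. 1"] C0 by (intro mult_left_mono) auto
    also have "\<dots> = C * q" by (simp add: P1 q_def)
    finally show ?thesis .
  qed
  have rest: "(\<Sum>j\<in>I. P j * s' j * L (z j)) - (\<Sum>j\<in>I. P j * L (z j)) * (\<Sum>j\<in>I. P j * s' j)
        = (\<Sum>j\<in>I. P j * (h i \<bullet> (B *v (z j - G))) * L (z j - G)) + (\<Sum>j\<in>I. P j * (z i \<bullet> (B *v h j)) * L (z j - G))"
  proof -
    have "(\<Sum>j\<in>I. P j * L (z j)) * (\<Sum>j\<in>I. P j * s' j) = (\<Sum>j\<in>I. P j * s' j * L G)"
      by (simp add: LG[symmetric] sum_distrib_left mult.commute)
    then have "(\<Sum>j\<in>I. P j * s' j * L (z j)) - (\<Sum>j\<in>I. P j * L (z j)) * (\<Sum>j\<in>I. P j * s' j)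
        = (\<Sum>j\<in>I. P j * s' j * L (z j - G))"
      by (simp add: Ldiff sum_subtractf right_diff_distrib)
    also have "\<dots> = (\<Sum>j\<in>I. P j * (h i \<bullet> (B *v z j)) * L (z j - G)) + (\<Sum>j\<in>I. P j * (z i \<bullet> (B *v h j)) * L (z j - G))"
      by (simp add: s'_def sum.distrib algebra_simps)
    also have "(\<Sum>j\<in>I. P j * (h i \<bullet> (B *v z j)) * L (z j - G))
       = (\<Sum>j\<in>I. P j * (h i \<bullet> (B *v (z j - G))) * L (z j - G)) + (h i \<bullet> (B *v G)) * (\<Sum>j\<in>I. P j * L (z j - G))"
      by (simp add: matrix_vector_mult_diff_distrib inner_diff_right algebra_simps sum.distrib sum_distrib_left sum_subtractf)
    finally show ?thesis by (simp add: sum0)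
  qed
  have T1: "\<bar>\<Sum>j\<in>I. P j * (h i \<bullet> (B *v (z j - G))) * L (z j - G)\<bar> \<le> C * (a * R\<^sup>2 * norm (h i))"
  proof -
    have "\<bar>\<Sum>j\<in>I. P j * (h i \<bullet> (B *v (z j - G))) * L (z j - G)\<bar>
        \<le> (\<Sum>j\<in>I. \<bar>P j * (h i \<bullet> (B *v (z j - G))) * L (z j - G)\<bar>)" by (rule sum_abs)
    also have "\<dots> \<le> (\<Sum>j\<in>I. P j * (a * norm (h i) * norm (z j - G)) * (C * norm (z j - G)))"
      using Pnn a0 by (intro sum_mono) (auto simp: abs_mult intro!: mult_mono Ba LC)
    also have "\<dots> = C * a * norm (h i) * Va"
      by (simp add: Va_def sum_distrib_left power2_eq_square algebra_simps)
    also have "\<dots> \<le> C * a * norm (h i) * R\<^sup>2"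
      using Va_le C0 a0 by (intro mult_left_mono) auto
    finally show ?thesis by (simp add: algebra_simps)
  qed
  have T2: "\<bar>\<Sum>j\<in>I. P j * (z i \<bullet> (B *v h j)) * L (z j - G)\<bar> \<le> C * (a * R\<^sup>2 * q)"
  proof -
    have "\<bar>\<Sum>j\<in>I. P j * (z i \<bullet> (B *v h j)) * L (z j - G)\<bar>
        \<le> (\<Sum>j\<in>I. \<bar>P j * (z i \<bullet> (B *v h j)) * L (z j - G)\<bar>)" by (rule sum_abs)
    also have "\<dots> \<le> (\<Sum>j\<in>I. P j * (a * R * norm (h j)) * (C * norm (z j - G)))"
    proof (intro sum_mono)
      fix j assume j: "j \<in> I"
      have "\<bar>z i \<bullet> (B *v h j)\<bar> \<le> a * R * norm (h j)"
        using Ba[of "z i" "h j"] zR iI a0 by (meson mult_right_mono mult_left_mono norm_ge_zero order_trans)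
      then show "\<bar>P j * (z i \<bullet> (B *v h j)) * L (z j - G)\<bar> \<le> P j * (a * R * norm (h j)) * (C * norm (z j - G))"
        using Pnn j by (auto simp: abs_mult intro!: mult_mono LC)
    qed
    also have "\<dots> = C * a * R * (\<Sum>j\<in>I. P j * norm (h j) * norm (z j - G))"
      by (simp add: sum_distrib_left algebra_simps)
    also have "\<dots> \<le> C * a * R * (q * sqrt Va)"
      using wcs[OF Pnn, of "\<lambda>j. norm (h j)" "\<lambda>j. norm (z j - G)"] C0 a0 R0
      by (intro mult_left_mono) (auto simp: q_def Va_def)
    also have "\<dots> \<le> C * a * R * (q * R)"
      using sqVa C0 a0 R0 q0 by (intro mult_left_mono) auto
    finally show ?thesis by (simp add: algebra_simps power2_eq_square)
  qed
  have "\<bar>(\<Sum>j\<in>I. P j * L (h j)) + (\<Sum>j\<in>I. P j * s' j * L (z j)) - (\<Sum>j\<in>I. P j * L (z j)) * (\<Sum>j\<in>I. P j * s' j)\<bar>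
     \<le> C * q + C * (a * R\<^sup>2 * norm (h i)) + C * (a * R\<^sup>2 * q)"
    using T0 T1 T2 rest by (smt (verit, best))
  then show ?thesis by (simp add: s'_def q_def algebra_simps)
qed


lemma deriv_ratio:
  fixes s u :: "'i \<Rightarrow> real \<Rightarrow> real"
  assumes fin: "finite I" and ne: "I \<noteq> {}"
    and ds: "\<And>j. j \<in> I \<Longrightarrow> (s j has_real_derivative s' j) (at t)"
    and du: "\<And>j. j \<in> I \<Longrightarrow> (u j has_real_derivative u' j) (at t)"
  shows "((\<lambda>t. (\<Sum>j\<in>I. exp (s j t) * u j t) / (\<Sum>j\<in>I. exp (s j t))) has_real_derivative
     (\<Sum>j\<in>I. (exp (s j t) / (\<Sum>l\<in>I. exp (s l t))) * u' j)
     + (\<Sum>j\<in>I. (exp (s j t) / (\<Sum>l\<in>I. exp (s l t))) * s' j * u j t)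
     - (\<Sum>j\<in>I. (exp (s j t) / (\<Sum>l\<in>I. exp (s l t))) * u j t) * (\<Sum>j\<in>I. (exp (s j t) / (\<Sum>l\<in>I. exp (s l t))) * s' j)) (at t)"
proof -
  define S where "S = (\<Sum>l\<in>I. exp (s l t))"
  have Spos: "S > 0" unfolding S_def using fin ne by (intro sum_pos) auto
  have dN: "((\<lambda>t. \<Sum>j\<in>I. exp (s j t) * u j t) has_real_derivative (\<Sum>j\<in>I. exp (s j t) * s' j * u j t + exp (s j t) * u' j)) (at t)"
    by (rule DERIV_sum) (auto intro!: derivative_eq_intros ds du simp: algebra_simps)
  have dS: "((\<lambda>t. \<Sum>j\<in>I. exp (s j t)) has_real_derivative (\<Sum>j\<in>I. exp (s j t) * s' j)) (at t)"
    by (rule DERIV_sum) (auto intro!: derivative_eq_intros ds simp: algebra_simps)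
  have q: "((\<lambda>t. (\<Sum>j\<in>I. exp (s j t) * u j t) / (\<Sum>j\<in>I. exp (s j t))) has_real_derivative
     ((\<Sum>j\<in>I. exp (s j t) * s' j * u j t + exp (s j t) * u' j) * S - (\<Sum>j\<in>I. exp (s j t) * s' j) * (\<Sum>j\<in>I. exp (s j t) * u j t)) / S ^ Suc (Suc 0)) (at t)"
    using DERIV_quotient[OF dN dS] Spos unfolding S_def by simp
  have eq: "((\<Sum>j\<in>I. exp (s j t) * s' j * u j t + exp (s j t) * u' j) * S - (\<Sum>j\<in>I. exp (s j t) * s' j) * (\<Sum>j\<in>I. exp (s j t) * u j t)) / S ^ Suc (Suc 0)
     = (\<Sum>j\<in>I. (exp (s j t) / S) * u' j)
     + (\<Sum>j\<in>I. (exp (s j t) / S) * s' j * u j t)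
     - (\<Sum>j\<in>I. (exp (s j t) / S) * u j t) * (\<Sum>j\<in>I. (exp (s j t) / S) * s' j)"
  proof -
    have a: "(\<Sum>j\<in>I. (exp (s j t) / S) * u' j) = (\<Sum>j\<in>I. exp (s j t) * u' j) / S"
      by (simp add: sum_divide_distrib)
    have b: "(\<Sum>j\<in>I. (exp (s j t) / S) * s' j * u j t) = (\<Sum>j\<in>I. exp (s j t) * s' j * u j t) / S"
      by (simp add: sum_divide_distrib)
    have c: "(\<Sum>j\<in>I. (exp (s j t) / S) * u j t) = (\<Sum>j\<in>I. exp (s j t) * u j t) / S"
      by (simp add: sum_divide_distrib)
    have d: "(\<Sum>j\<in>I. (exp (s j t) / S) * s' j) = (\<Sum>j\<in>I. exp (s j t) * s' j) / S"
      by (simp add: sum_divide_distrib)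
    show ?thesis unfolding a b c d using Spos
      by (simp add: sum.distrib field_simps power2_eq_square)
  qed
  show ?thesis using q[unfolded eq] unfolding S_def .
qed

lemma deriv_quad:
  fixes x h y k :: "real^'d" and M :: "real^'d^'d"
  shows "((\<lambda>t. (x + t *\<^sub>R h) \<bullet> (M *v (y + t *\<^sub>R k))) has_real_derivative
          (h \<bullet> (M *v (y + t *\<^sub>R k)) + (x + t *\<^sub>R h) \<bullet> (M *v k))) (at t)"
proof -
  have e: "(\<lambda>t. (x + t *\<^sub>R h) \<bullet> (M *v (y + t *\<^sub>R k))) = (\<lambda>t. x \<bullet> (M *v y) + t * (h \<bullet> (M *v y) + x \<bullet> (M *v k)) + t\<^sup>2 * (h \<bullet> (M *v k)))"
    by (auto simp: matrix_vector_right_distrib matrix_vector_mult_scaleR inner_add_left inner_add_right algebra_simps power2_eq_square)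
  have "((\<lambda>t. x \<bullet> (M *v y) + t * (h \<bullet> (M *v y) + x \<bullet> (M *v k)) + t\<^sup>2 * (h \<bullet> (M *v k))) has_real_derivative
      (h \<bullet> (M *v y) + x \<bullet> (M *v k)) + 2 * t * (h \<bullet> (M *v k))) (at t)"
    by (auto intro!: derivative_eq_intros)
  moreover have "(h \<bullet> (M *v y) + x \<bullet> (M *v k)) + 2 * t * (h \<bullet> (M *v k)) = h \<bullet> (M *v (y + t *\<^sub>R k)) + (x + t *\<^sub>R h) \<bullet> (M *v k)"
    by (auto simp: matrix_vector_right_distrib matrix_vector_mult_scaleR inner_add_left inner_add_right algebra_simps)
  ultimately show ?thesis unfolding e by simp
qed

theorem mainTheorem10:
  fixes Q K V :: "real^'d^'k" and R :: real and n :: nat and A :: "real^'d^'d"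
  assumes "R > 0"
    and "A = (1 / sqrt (real CARD('k))) *\<^sub>R (transpose K ** Q)"
  shows "\<forall>X Y. (\<forall>i<n. norm (X i) \<le> R) \<and> (\<forall>i<n. norm (Y i) \<le> R) \<longrightarrow>
           frob n (\<lambda>i. masked_attn A V X i - masked_attn A V Y i)
           \<le> sqrt 3 * spec_norm V * sqrt ((spec_norm A)\<^sup>2 * R ^ 4 * (real n + 1) + real n)
             * frob n (\<lambda>i. X i - Y i)"
proof (intro allI impI)
  fix X Y :: "nat \<Rightarrow> real^'d"
  assume bnd: "(\<forall>i<n. norm (X i) \<le> R) \<and> (\<forall>i<n. norm (Y i) \<le> R)"
  have R0: "R \<ge> 0" using assms(1) by simp
  define f where "f = masked_attn A V"
  define H where "H j = Y j - X j" for j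
  define Z where "Z t j = X j + t *\<^sub>R H j" for t j
  define D where "D i = f Y i - f X i" for i
  define L where "L i v = D i \<bullet> (V *v v)" for i v
  define a where "a = spec_norm A"
  define nV where "nV = spec_norm V"
  define sc where "sc t i j = Z t i \<bullet> (transpose A *v Z t j)" for t i j
  define ds where "ds t i j = H i \<bullet> (transpose A *v Z t j) + Z t i \<bullet> (transpose A *v H j)" for t i j
  define Pt where "Pt t i j = exp (sc t i j) / (\<Sum>l\<le>i. exp (sc t i l))" for t i j
  define dpsi where "dpsi t i = (\<Sum>j\<le>i. Pt t i j * L i (H j)) + (\<Sum>j\<le>i. Pt t i j * ds t i j * L i (Z t j))
      - (\<Sum>j\<le>i. Pt t i j * L i (Z t j)) * (\<Sum>j\<le>i. Pt t i j * ds t i j)" for t i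
  define psi where "psi t = (\<Sum>i<n. D i \<bullet> f (Z t) i)" for t
  have a0: "a \<ge> 0" unfolding a_def spec_norm_def by (rule onorm_pos_le) simp
  have nV0: "nV \<ge> 0" unfolding nV_def spec_norm_def by (rule onorm_pos_le) simp
  have linL: "linear (L i)" for i
    by (rule linearI) (simp_all add: L_def matrix_vector_right_distrib matrix_vector_mult_scaleR inner_add_right)
  have fZ: "D i \<bullet> f (Z t) i = (\<Sum>j\<le>i. exp (sc t i j) * L i (Z t j)) / (\<Sum>j\<le>i. exp (sc t i j))" for i t
  proof -
    have "D i \<bullet> f (Z t) i = L i (\<Sum>j\<le>i. attn_P A (Z t) i j *\<^sub>R Z t j)"
      by (simp add: L_def f_def masked_attn_def)
    also have "\<dots> = (\<Sum>j\<le>i. attn_P A (Z t) i j * L i (Z t j))"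
      using linL[of i] by (simp add: linear_sum linear_cmul)
    also have "\<dots> = (\<Sum>j\<le>i. exp (sc t i j) * L i (Z t j)) / (\<Sum>j\<le>i. exp (sc t i j))"
      by (simp add: attn_P_def sc_def sum_divide_distrib)
    finally show ?thesis .
  qed
  have dpsi_i: "((\<lambda>t. D i \<bullet> f (Z t) i) has_real_derivative dpsi t i) (at t)" for i t
  proof -
    have ds': "((\<lambda>t. sc t i j) has_real_derivative ds t i j) (at t)" for j
      unfolding sc_def ds_def Z_def by (rule deriv_quad)
    have du': "((\<lambda>t. L i (Z t j)) has_real_derivative L i (H j)) (at t)" for j
    proof -
      have "(\<lambda>t. L i (Z t j)) = (\<lambda>t. L i (X j) + t * L i (H j))"
        using linL[of i] by (simp add: Z_def linear_add linear_cmul)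
      moreover have "((\<lambda>t. L i (X j) + t * L i (H j)) has_real_derivative L i (H j)) (at t)"
        by (auto intro!: derivative_eq_intros)
      ultimately show ?thesis by simp
    qed
    have "((\<lambda>t. (\<Sum>j\<le>i. exp (sc t i j) * L i (Z t j)) / (\<Sum>j\<le>i. exp (sc t i j))) has_real_derivative dpsi t i) (at t)"
      using deriv_ratio[of "{..i}" "\<lambda>j t. sc t i j" "\<lambda>j. ds t i j" t "\<lambda>j t. L i (Z t j)" "\<lambda>j. L i (H j)", OF _ _ ds' du']
      by (simp add: dpsi_def Pt_def)
    then show ?thesis by (simp add: fZ)
  qed
  have dpsi: "(psi has_real_derivative (\<Sum>i<n. dpsi t i)) (at t)" for t
    unfolding psi_def by (rule DERIV_sum) (rule dpsi_i)
  obtain \<xi> where xi: "0 < \<xi>" "\<xi> < 1" and mvt: "psi 1 - psi 0 = (1 - 0) * (\<Sum>i<n. dpsi \<xi> i)"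
    using MVT2[of 0 1 psi "\<lambda>t. \<Sum>i<n. dpsi t i"] dpsi by auto
  have Z0: "Z 0 = X" and Z1: "Z 1 = Y" by (auto simp: Z_def H_def)
  define F2 where "F2 = (\<Sum>i<n. (norm (D i))\<^sup>2)"
  define Hf2 where "Hf2 = (\<Sum>i<n. (norm (H i))\<^sup>2)"
  have F2eq: "F2 = (\<Sum>i<n. dpsi \<xi> i)"
  proof -
    have "psi 1 - psi 0 = (\<Sum>i<n. D i \<bullet> D i)"
      by (simp add: psi_def Z0 Z1 sum_subtractf[symmetric] inner_diff_right D_def)
    then show ?thesis using mvt by (simp add: F2_def power2_norm_eq_inner)
  qed
  define q where "q i = sqrt (\<Sum>j\<le>i. Pt \<xi> i j * (norm (H j))\<^sup>2)" for i
  define m where "m i = q i + a * R\<^sup>2 * norm (H i) + a * R\<^sup>2 * q i" for i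
  have Ppos: "Pt \<xi> i j \<ge> 0" for i j unfolding Pt_def by (intro divide_nonneg_nonneg sum_nonneg) auto
  have Psum: "(\<Sum>j\<le>i. Pt \<xi> i j) = 1" for i
  proof -
    have "(\<Sum>l\<le>i. exp (sc \<xi> i l)) > 0" by (intro sum_pos) auto
    then show ?thesis by (simp add: Pt_def sum_divide_distrib[symmetric])
  qed
  have Ple1: "Pt \<xi> i j \<le> 1" if "j \<le> i" for i j
  proof -
    have "exp (sc \<xi> i j) \<le> (\<Sum>l\<le>i. exp (sc \<xi> i l))"
      using that by (intro member_le_sum) auto
    moreover have "(\<Sum>l\<le>i. exp (sc \<xi> i l)) > 0" by (intro sum_pos) auto
    ultimately show ?thesis by (simp add: Pt_def divide_le_eq_1)
  qed
  have Zb: "norm (Z \<xi> j) \<le> R" if "j < n" for j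
  proof -
    have "Z \<xi> j = (1 - \<xi>) *\<^sub>R X j + \<xi> *\<^sub>R Y j" by (simp add: Z_def H_def algebra_simps)
    then have "norm (Z \<xi> j) \<le> (1 - \<xi>) * norm (X j) + \<xi> * norm (Y j)"
      using xi by (metis abs_of_nonneg less_eq_real_def norm_scaleR norm_triangle_ineq diff_ge_0_iff_ge)
    also have "\<dots> \<le> (1 - \<xi>) * R + \<xi> * R"
      using xi bnd that by (intro add_mono mult_left_mono) auto
    finally show ?thesis by (simp add: algebra_simps)
  qed
  have Ba: "\<bar>u \<bullet> (transpose A *v w)\<bar> \<le> a * norm u * norm w" for u w
  proof -
    have "u \<bullet> (transpose A *v w) = (A *v u) \<bullet> w"
      by (metis dot_lmul_matrix vector_transpose_matrix)
    then have "\<bar>u \<bullet> (transpose A *v w)\<bar> \<le> norm (A *v u) * norm w" by (simp add: Cauchy_Schwarz_ineq2)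
    also have "\<dots> \<le> a * norm u * norm w"
      using onorm[OF matrix_vector_mul_bounded_linear[of A], of u]
      by (intro mult_right_mono) (auto simp: a_def spec_norm_def)
    finally show ?thesis .
  qed
  have LC: "\<bar>L i v\<bar> \<le> (norm (D i) * nV) * norm v" for i v
  proof -
    have "\<bar>L i v\<bar> \<le> norm (D i) * norm (V *v v)" unfolding L_def by (rule Cauchy_Schwarz_ineq2)
    also have "\<dots> \<le> norm (D i) * (nV * norm v)"
      using onorm[OF matrix_vector_mul_bounded_linear[of V], of v]
      by (intro mult_left_mono) (auto simp: nV_def spec_norm_def)
    finally show ?thesis by (simp add: algebra_simps)
  qed
  have rowb: "\<bar>dpsi \<xi> i\<bar> \<le> (norm (D i) * nV) * m i" if "i < n" for i
    unfolding dpsi_def ds_def m_def q_def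
    by (rule row_bound[where R=R]) (use Ppos Psum Zb that R0 linL LC Ba a0 nV0 in auto)
  define Kc where "Kc = (spec_norm A)\<^sup>2 * R ^ 4 * (real n + 1) + real n"
  have Hf0: "Hf2 \<ge> 0" unfolding Hf2_def by (simp add: sum_nonneg)
  have F0: "F2 \<ge> 0" unfolding F2_def by (simp add: sum_nonneg)
  have K0: "Kc \<ge> 0" unfolding Kc_def by simp
  have qsq: "(q i)\<^sup>2 \<le> Hf2" if "i < n" for i
  proof -
    have "(q i)\<^sup>2 = (\<Sum>j\<le>i. Pt \<xi> i j * (norm (H j))\<^sup>2)"
      unfolding q_def using Ppos by (intro real_sqrt_pow2 sum_nonneg) auto
    also have "\<dots> \<le> (\<Sum>j\<le>i. (norm (H j))\<^sup>2)"
      using Ple1 Ppos by (intro sum_mono) (auto intro: mult_left_le_one_le)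
    also have "\<dots> \<le> Hf2" unfolding Hf2_def using that by (intro sum_mono2) auto
    finally show ?thesis .
  qed
  have three: "(x + y + z)\<^sup>2 \<le> 3 * (x\<^sup>2 + y\<^sup>2 + z\<^sup>2)" for x y z :: real
  proof -
    have "3 * (x\<^sup>2 + y\<^sup>2 + z\<^sup>2) - (x + y + z)\<^sup>2 = (x - y)\<^sup>2 + (y - z)\<^sup>2 + (x - z)\<^sup>2"
      by (simp add: power2_eq_square algebra_simps)
    moreover have "(x - y)\<^sup>2 + (y - z)\<^sup>2 + (x - z)\<^sup>2 \<ge> 0" by simp
    ultimately show ?thesis by linarith
  qed
  have msq: "(m i)\<^sup>2 \<le> 3 * (Hf2 + a\<^sup>2 * R ^ 4 * (norm (H i))\<^sup>2 + a\<^sup>2 * R ^ 4 * Hf2)" if "i < n" for i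
  proof -
    have "(m i)\<^sup>2 \<le> 3 * ((q i)\<^sup>2 + (a * R\<^sup>2 * norm (H i))\<^sup>2 + (a * R\<^sup>2 * q i)\<^sup>2)"
      unfolding m_def by (rule three)
    also have "(a * R\<^sup>2 * norm (H i))\<^sup>2 = a\<^sup>2 * R ^ 4 * (norm (H i))\<^sup>2" by (simp add: power_mult_distrib power_mult[symmetric])
    also have "(a * R\<^sup>2 * q i)\<^sup>2 = a\<^sup>2 * R ^ 4 * (q i)\<^sup>2" by (simp add: power_mult_distrib power_mult[symmetric])
    also have "3 * ((q i)\<^sup>2 + a\<^sup>2 * R ^ 4 * (norm (H i))\<^sup>2 + a\<^sup>2 * R ^ 4 * (q i)\<^sup>2)
        \<le> 3 * (Hf2 + a\<^sup>2 * R ^ 4 * (norm (H i))\<^sup>2 + a\<^sup>2 * R ^ 4 * Hf2)"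
      using qsq[OF that] by (intro mult_left_mono add_mono mult_left_mono) auto
    finally show ?thesis .
  qed
  have msum: "(\<Sum>i<n. (m i)\<^sup>2) \<le> 3 * Hf2 * Kc"
  proof -
    have "(\<Sum>i<n. (m i)\<^sup>2) \<le> (\<Sum>i<n. 3 * (Hf2 + a\<^sup>2 * R ^ 4 * (norm (H i))\<^sup>2 + a\<^sup>2 * R ^ 4 * Hf2))"
      using msq by (intro sum_mono) auto
    also have "\<dots> = 3 * (real n * Hf2 + a\<^sup>2 * R ^ 4 * Hf2 + real n * a\<^sup>2 * R ^ 4 * Hf2)"
      by (simp add: sum.distrib sum_distrib_left[symmetric] Hf2_def algebra_simps)
    also have "\<dots> = 3 * Hf2 * Kc" by (simp add: Kc_def a_def algebra_simps)
    finally show ?thesis .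
  qed
  have S1: "F2 \<le> nV * (sqrt F2 * sqrt (\<Sum>i<n. (m i)\<^sup>2))"
  proof -
    have "F2 \<le> (\<Sum>i<n. \<bar>dpsi \<xi> i\<bar>)" unfolding F2eq by (rule order_trans[OF _ sum_abs]) simp
    also have "\<dots> \<le> (\<Sum>i<n. norm (D i) * nV * m i)" using rowb by (intro sum_mono) auto
    also have "\<dots> = nV * (\<Sum>i<n. 1 * norm (D i) * m i)" by (simp add: sum_distrib_left algebra_simps)
    also have "\<dots> \<le> nV * (sqrt (\<Sum>i<n. 1 * (norm (D i))\<^sup>2) * sqrt (\<Sum>i<n. 1 * (m i)\<^sup>2))"
      using wcs[of "{..<n}" "\<lambda>_. 1" "\<lambda>i. norm (D i)" m] nV0 by (intro mult_left_mono) auto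
    finally show ?thesis by (simp add: F2_def)
  qed
  have S2: "sqrt (\<Sum>i<n. (m i)\<^sup>2) \<le> sqrt 3 * sqrt Kc * sqrt Hf2"
  proof -
    have "sqrt (\<Sum>i<n. (m i)\<^sup>2) \<le> sqrt (3 * Hf2 * Kc)" by (rule real_sqrt_le_mono[OF msum])
    also have "\<dots> = sqrt 3 * sqrt Kc * sqrt Hf2" by (simp add: real_sqrt_mult)
    finally show ?thesis .
  qed
  have main: "sqrt F2 \<le> sqrt 3 * nV * sqrt Kc * sqrt Hf2"
  proof (cases "F2 = 0")
    case True then show ?thesis using nV0 K0 Hf0 by simp
  next
    case False
    then have sp: "sqrt F2 > 0" using F0 by simp
    have "sqrt F2 * sqrt F2 = F2" using F0 by simp
    also have "F2 \<le> nV * (sqrt F2 * (sqrt 3 * sqrt Kc * sqrt Hf2))"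
    proof -
      have "sqrt F2 * sqrt (\<Sum>i<n. (m i)\<^sup>2) \<le> sqrt F2 * (sqrt 3 * sqrt Kc * sqrt Hf2)"
        using S2 sp by (intro mult_left_mono) auto
      then have "nV * (sqrt F2 * sqrt (\<Sum>i<n. (m i)\<^sup>2)) \<le> nV * (sqrt F2 * (sqrt 3 * sqrt Kc * sqrt Hf2))"
        using nV0 by (rule mult_left_mono)
      then show ?thesis using S1 by linarith
    qed
    finally have "sqrt F2 * sqrt F2 \<le> sqrt F2 * (sqrt 3 * nV * sqrt Kc * sqrt Hf2)" by (simp add: algebra_simps)
    then show ?thesis by (rule mult_left_le_imp_le[OF _ sp])
  qed
  have fr1: "frob n (\<lambda>i. masked_attn A V X i - masked_attn A V Y i) = sqrt F2"
    unfolding frob_def F2_def D_def f_def by (simp add: norm_minus_commute)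
  have fr2: "frob n (\<lambda>i. X i - Y i) = sqrt Hf2"
    unfolding frob_def Hf2_def H_def by (simp add: norm_minus_commute)
  show "frob n (\<lambda>i. masked_attn A V X i - masked_attn A V Y i)
           \<le> sqrt 3 * spec_norm V * sqrt ((spec_norm A)\<^sup>2 * R ^ 4 * (real n + 1) + real n)
             * frob n (\<lambda>i. X i - Y i)"
    using main unfolding fr1 fr2 Kc_def nV_def .
qed
end
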